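(* Let $\sigma\in\Sigma$, $q>0$, $K=[-q\mathbf 1,q\mathbf 1]$, and assume $\sigma$ takes at least one finite value on $K$ (so $I(K,\sigma)$ is finite). Fix $t>0$. Then there are finite positive constants $C_1,C_2$ (not depending on $\sigma$) and a finite number $v_0(\sigma)$ such that for all $v\ge v_0(\sigma)$, $$P^\sigma\{\Psi_{q,I(K,\sigma)}(\sigma(t))>v\}\le C_1\exp(-C_2v^{1/(d+1)}).$$
   Context: Order: for $x,y\in\mathbb R^d$, $x\le y$ iff $x_i\le y_i$ for all $i$; $\mathbf 1=(1,\dots,1)$; $|x|_\infty=\max_i|x_i|$; $d\ge2$. $\mathbb Z^*=\mathbb Z\cup\{\pm\infty\}$. The state space $\Sigma$ is the set of functions $\sigma:\mathbb R^d\to\mathbb Z^*$ such that (i) $x\le y$ implies $\sigma(x)\le\sigma(y)$; (ii) for every cube $[-q\mathbf 1,q\mathbf 1]$ there are finite partitions $-q=s_i^0<\dots<s_i^{m_i}=q$ of each coordinate axis such that $\sigma$ is constant on each rectangle $\prod_i[s_i^{k_i},s_i^{k_i+1})$; (iii) for every $b\in\mathbb R^d$, $\lim_{M\to\infty}\sup\{|y|_\infty^{-d/(d+1)}\sigma(y):y\le b,|y|_\infty\ge M\}=-\infty$. Dynamics: a rate-one Poisson point process on $\mathbb R^d\times(0,\infty)$; $\mathbf H((y,0),(x,t))$ is the maximal number of Poisson points on a strictly increasing chain (coordinatewise order in $\mathbb R^{d+1}$) in $\{(\eta,s):y<\eta\le x,0<s\le t\}$; from $\sigma$, $\sigma(x,t)=\sup_{y\le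 x}\{\sigma(y)+\mathbf H((y,0),(x,t))\}$, $\sigma(t)=\sigma(\cdot,t)$, with law $P^\sigma$. $I(K,\sigma)=\min\{\sigma(x):x\in K,\ \sigma(x)\text{ finite}\}$. For $q>0$, $k\in\mathbb Z$ and a function $\rho:\mathbb R^d\to\mathbb Z^*$, $\Psi_{q,k}(\rho)=\sup_{x\le q\mathbf 1}\frac{|x|_\infty^d}{(1\vee\{k-\rho(x)\})^{d+1}}$, with the conventions $k-(-\infty)=+\infty$, $k-(+\infty)=-\infty$, and $a/\infty=0$. *)

theory Defs
  imports "HOL-Analysis.Analysis" "HOL-Probability.Probability"
begin

text \<open>Points of R^d are vectors \<open>real ^ 'd\<close>; the order \<open>x \<le> y\<close> is the library's
  coordinatewise order on vectors, and \<open>1 = (\<chi> i. 1)\<close>.  Values in Z* = Z \<union> {+-oo}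
  are represented as extended reals that are integers or infinite.\<close>

definition linf :: "real ^ 'd \<Rightarrow> real" where
  "linf x = Max (range (\<lambda>i. \<bar>x $ i\<bar>))"

definition vlt :: "real ^ 'd \<Rightarrow> real ^ 'd \<Rightarrow> bool" where
  "vlt x y \<longleftrightarrow> (\<forall>i. x $ i < y $ i)"

definition slt :: "((real ^ 'd) \<times> real) \<Rightarrow> ((real ^ 'd) \<times> real) \<Rightarrow> bool" where
  "slt p p' \<longleftrightarrow> vlt (fst p) (fst p') \<and> snd p < snd p'"

definition zstar :: "ereal set" where
  "zstar = range (\<lambda>n::int. ereal (of_int n)) \<union> {\<infinity>, -\<infinity>}"

definition state_space :: "(real ^ 'd \<Rightarrow> ereal) set" where
  "state_space = {\<sigma>.
     (\<forall>x. \<sigma> x \<in> zstar) \<and>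
     (\<forall>x y. x \<le> y \<longrightarrow> \<sigma> x \<le> \<sigma> y) \<and>
     (\<forall>q>0. \<exists>S :: 'd \<Rightarrow> real set.
         (\<forall>i. finite (S i) \<and> -q \<in> S i \<and> q \<in> S i \<and> S i \<subseteq> {-q..q}) \<and>
         (\<forall>x y. (\<forall>i. x $ i \<in> {-q..<q} \<and> y $ i \<in> {-q..<q} \<and>
                     (\<forall>s\<in>S i. s \<le> x $ i \<longleftrightarrow> s \<le> y $ i)) \<longrightarrow> \<sigma> x = \<sigma> y)) \<and>
     (\<forall>b. ((\<lambda>M. SUP y\<in>{y. y \<le> b \<and> linf y \<ge> M}.
              ereal (linf y powr (- (real CARD('d) / (real CARD('d) + 1)))) * \<sigma> y)
           \<longlongrightarrow> -\<infinity>) at_top)}"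

text \<open>Rate-one Poisson point process on R^d \<times> (0,oo), given as a random set of points
  \<open>PP \<omega>\<close> on a probability space M: for every bounded Borel set B \<subseteq> R^d \<times> (0,oo),
  the number of points in B is Poisson distributed with mean Leb(B), and the counts in
  finitely many pairwise disjoint such sets are independent.\<close>
definition npts :: "('w \<Rightarrow> ((real ^ 'd) \<times> real) set) \<Rightarrow> ((real ^ 'd) \<times> real) set \<Rightarrow> 'w \<Rightarrow> nat" where
  "npts PP B \<omega> = card (PP \<omega> \<inter> B)"

definition admissible_set :: "((real ^ 'd) \<times> real) set \<Rightarrow> bool" where
  "admissible_set B \<longleftrightarrow> B \<in> sets borel \<and> bounded B \<and> B \<subseteq> UNIV \<times> {0<..}"

definition poisson_process ::
  "'w measure \<Rightarrow> ('w \<Rightarrow> ((real ^ 'd) \<times> real) set) \<Rightarrow> bool" where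
  "poisson_process M PP \<longleftrightarrow> prob_space M \<and>
     (\<forall>B. admissible_set B \<longrightarrow>
        (\<forall>k::nat. {\<omega>\<in>space M. finite (PP \<omega> \<inter> B) \<and> npts PP B \<omega> = k} \<in> sets M \<and>
           measure M {\<omega>\<in>space M. finite (PP \<omega> \<inter> B) \<and> npts PP B \<omega> = k}
             = measure lborel B ^ k / fact k * exp (- measure lborel B))) \<and>
     (\<forall>(I::nat set) B. finite I \<and> (\<forall>i\<in>I. admissible_set (B i)) \<and> disjoint_family_on B I
        \<longrightarrow> prob_space.indep_vars M (\<lambda>_. count_space UNIV) (\<lambda>i. npts PP (B i)) I)"

text \<open>H((y,0),(x,t)): maximal number of Poisson points on a strictly increasing chain in
  {(eta,s). y < eta \<le> x, 0 < s \<le> t}.\<close>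
definition Hpp :: "((real ^ 'd) \<times> real) set \<Rightarrow> real ^ 'd \<Rightarrow> real ^ 'd \<Rightarrow> real \<Rightarrow> ereal" where
  "Hpp P y x t = (SUP ps\<in>{ps. sorted_wrt slt ps \<and>
        set ps \<subseteq> P \<inter> {(\<eta>, s). vlt y \<eta> \<and> \<eta> \<le> x \<and> 0 < s \<and> s \<le> t}}. ereal (real (length ps)))"

definition evolve :: "(real ^ 'd \<Rightarrow> ereal) \<Rightarrow> ((real ^ 'd) \<times> real) set \<Rightarrow> real \<Rightarrow> real ^ 'd \<Rightarrow> ereal" where
  "evolve \<sigma> P t x = (SUP y\<in>{y. y \<le> x}. \<sigma> y + Hpp P y x t)"

definition Imin :: "(real ^ 'd) set \<Rightarrow> (real ^ 'd \<Rightarrow> ereal) \<Rightarrow> ereal" where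
  "Imin K \<sigma> = Inf {\<sigma> x | x. x \<in> K \<and> \<sigma> x \<noteq> \<infinity> \<and> \<sigma> x \<noteq> -\<infinity>}"

text \<open>Psi_{q,k}(rho) = sup_{x \<le> q1} |x|^d / (1 \<or> (k - rho x))^(d+1), computed in the
  extended reals (so k - (-oo) = oo, k - oo = -oo, a/oo = 0).\<close>
definition Psi :: "real \<Rightarrow> ereal \<Rightarrow> (real ^ 'd \<Rightarrow> ereal) \<Rightarrow> ereal" where
  "Psi q k \<rho> = (SUP x\<in>{x. x \<le> q *\<^sub>R 1}.
      ereal (linf x ^ CARD('d)) / (max 1 (k - \<rho> x)) ^ (CARD('d) + 1))"

end

theory Submission
  imports Defs
begin

definition MS :: "nat \<Rightarrow> nat \<Rightarrow> (nat \<Rightarrow> nat) set" where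
  "MS n k = {f. (\<forall>j. n \<le> j \<longrightarrow> f j = 0) \<and> (\<forall>j<n. f j \<le> k) \<and> (\<forall>i j. i \<le> j \<longrightarrow> j < n \<longrightarrow> f i \<le> f j)}"

lemma MS_aux:
  assumes f: "f \<in> MS n k" and g: "g \<in> MS n k"
    and T: "(\<lambda>j. j + f j) ` {..<n} = (\<lambda>j. j + g j) ` {..<n}"
    and eq: "\<forall>j'<j. f j' = g j'" and j: "j < n" and lt: "f j < g j"
  shows False
proof -
  have "j + f j \<in> (\<lambda>j. j + g j) ` {..<n}" using T j by blast
  then obtain j' where j': "j' < n" "j + f j = j' + g j'" by auto
  have mf: "\<And>a b. a \<le> b \<Longrightarrow> b < n \<Longrightarrow> f a \<le> f b" using f by (auto simp: MS_def)
  have mg: "\<And>a b. a \<le> b \<Longrightarrow> b < n \<Longrightarrow> g a \<le> g b" using g by (auto simp: MS_def)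
  consider "j' < j" | "j' = j" | "j' > j" by linarith
  then show False
  proof cases
    case 1
    then have "g j' = f j'" using eq by auto
    moreover have "f j' \<le> f j" using mf[of j' j] 1 j by auto
    ultimately show False using j' 1 by linarith
  next
    case 2 then show False using j' lt by auto
  next
    case 3
    have "g j \<le> g j'" using mg[of j j'] 3 j' by auto
    then show False using j' 3 lt by linarith
  qed
qed

lemma MS_inj: "inj_on (\<lambda>f. (\<lambda>j. j + f j) ` {..<n}) (MS n k)"
proof (rule inj_onI)
  fix f g assume f: "f \<in> MS n k" and g: "g \<in> MS n k"
    and T: "(\<lambda>j. j + f j) ` {..<n} = (\<lambda>j. j + g j) ` {..<n}"
  have "\<forall>j'<j. f j' = g j'" if "j \<le> n" for j
    using that
  proof (induction j)
    case 0 then show ?case by auto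
  next
    case (Suc j)
    have IH: "\<forall>j'<j. f j' = g j'" using Suc by auto
    have "f j = g j"
    proof (rule ccontr)
      assume "f j \<noteq> g j"
      then consider "f j < g j" | "g j < f j" by linarith
      then show False
      proof cases
        case 1 then show False using MS_aux[OF f g T IH] Suc by auto
      next
        case 2 then show False using MS_aux[OF g f T[symmetric], of j] IH Suc by auto
      qed
    qed
    then show ?case using IH less_Suc_eq by auto
  qed
  then have "\<forall>j<n. f j = g j" by auto
  moreover have "\<forall>j. n \<le> j \<longrightarrow> f j = 0 \<and> g j = 0" using f g by (auto simp: MS_def)
  ultimately show "f = g" by (metis not_le ext)
qed

lemma MS_card: "finite (MS n k) \<and> card (MS n k) \<le> 2 ^ (n + k)"
proof -
  let ?T = "\<lambda>f. (\<lambda>j. j + f j) ` {..<n}"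
  have sub: "?T ` MS n k \<subseteq> Pow {..<n+k}"
  proof
    fix S assume "S \<in> ?T ` MS n k"
    then obtain f where f: "f \<in> MS n k" "S = ?T f" by auto
    have "j + f j < n + k" if "j < n" for j using f that by (fastforce simp: MS_def)
    then show "S \<in> Pow {..<n+k}" using f by auto
  qed
  have fin: "finite (MS n k)"
    using finite_imageD[OF finite_subset[OF sub] MS_inj] by auto
  have "card (MS n k) \<le> card (Pow {..<n+k})"
    using card_inj_on_le[OF MS_inj sub] by auto
  then show ?thesis using fin by (simp add: card_Pow)
qed

lemma pow_fact_le_exp:
  fixes x :: real assumes "0 \<le> x"
  shows "x ^ n / fact n \<le> exp x"
proof -
  obtain t where t: "\<bar>t\<bar> \<le> \<bar>x\<bar>" "exp x = (\<Sum>m<Suc n. (x ^ m) / fact m) + (exp t / fact (Suc n)) * x ^ (Suc n)"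
    using Maclaurin_exp_le[of x "Suc n"] by blast
  have "x ^ n / fact n \<le> (\<Sum>m<Suc n. (x ^ m) / fact m)"
    using assms by (intro member_le_sum) auto
  moreover have "0 \<le> (exp t / fact (Suc n)) * x ^ (Suc n)" using assms by auto
  ultimately show ?thesis using t by linarith
qed

lemma exp_tail_bound:
  fixes x :: real assumes "0 \<le> x"
  shows "1 - exp (- x) * (\<Sum>m<n. x ^ m / fact m) \<le> x ^ n / fact n"
proof -
  obtain t where t: "\<bar>t\<bar> \<le> \<bar>x\<bar>" "exp x = (\<Sum>m<n. (x ^ m) / fact m) + (exp t / fact n) * x ^ n"
    using Maclaurin_exp_le[of x n] by blast
  have "t \<le> x" using t(1) assms by linarith
  then have "exp t \<le> exp x" by (simp only: exp_le_cancel_iff)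
  have "exp x - (\<Sum>m<n. (x ^ m) / fact m) = exp t * (x ^ n / fact n)" using t by simp
  also have "\<dots> \<le> exp x * (x ^ n / fact n)"
    using \<open>exp t \<le> exp x\<close> assms by (intro mult_right_mono) auto
  finally have "exp x - (\<Sum>m<n. (x ^ m) / fact m) \<le> exp x * (x ^ n / fact n)" .
  then have "exp (-x) * (exp x - (\<Sum>m<n. (x ^ m) / fact m)) \<le> exp (-x) * (exp x * (x ^ n / fact n))"
    by (intro mult_left_mono) auto
  then show ?thesis by (simp add: right_diff_distrib exp_minus field_simps)
qed

lemma poisson_tail:
  assumes pp: "poisson_process M PP" and B: "admissible_set B"
  shows "{\<omega>\<in>space M. \<not> (finite (PP \<omega> \<inter> B) \<and> npts PP B \<omega> < n)} \<in> sets M \<and>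
         measure M {\<omega>\<in>space M. \<not> (finite (PP \<omega> \<inter> B) \<and> npts PP B \<omega> < n)}
           \<le> measure lborel B ^ n / fact n"
proof -
  interpret prob_space M using pp by (simp add: poisson_process_def)
  define \<mu> where "\<mu> = measure lborel B"
  have mu0: "0 \<le> \<mu>" by (simp add: \<mu>_def)
  define E where "E k = {\<omega>\<in>space M. finite (PP \<omega> \<inter> B) \<and> npts PP B \<omega> = k}" for k
  have E: "E k \<in> sets M \<and> measure M (E k) = \<mu> ^ k / fact k * exp (- \<mu>)" for k
    using pp B unfolding poisson_process_def E_def \<mu>_def by blast
  define G where "G = {\<omega>\<in>space M. finite (PP \<omega> \<inter> B) \<and> npts PP B \<omega> < n}"
  have GU: "G = (\<Union>k\<in>{..<n}. E k)" unfolding G_def E_def by auto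
  have Gs: "G \<in> sets M" unfolding GU using E by auto
  have "measure M G = (\<Sum>k<n. measure M (E k))"
    unfolding GU
    by (rule finite_measure_finite_Union) (use E in \<open>auto simp: disjoint_family_on_def E_def\<close>)
  also have "\<dots> = exp (- \<mu>) * (\<Sum>k<n. \<mu> ^ k / fact k)"
    using E by (simp add: sum_distrib_left mult.commute)
  finally have mG: "measure M G = exp (- \<mu>) * (\<Sum>k<n. \<mu> ^ k / fact k)" .
  have eq: "{\<omega>\<in>space M. \<not> (finite (PP \<omega> \<inter> B) \<and> npts PP B \<omega> < n)} = space M - G"
    unfolding G_def by auto
  show ?thesis
    unfolding eq
    using Gs prob_compl[OF Gs] mG exp_tail_bound[OF mu0, of n] by (simp add: \<mu>_def)
qed

definition cell :: "real \<Rightarrow> real \<Rightarrow> real \<Rightarrow> ('d::finite \<Rightarrow> nat) \<Rightarrow> nat \<Rightarrow> ((real^'d) \<times> real) set" where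
  "cell lo h \<tau> c c' = cbox ((\<chi> i. lo + real (c i) * h), real c' * \<tau>) ((\<chi> i. lo + (real (c i) + 1) * h), (real c' + 1) * \<tau>)
     \<inter> (UNIV \<times> {0<..})"

lemma cell_borel: "cell lo h \<tau> c c' \<in> sets borel"
  unfolding cell_def by (intro sets.Int borel_closed borel_open closed_cbox open_Times) auto

lemma cell_bounded: "bounded (cell lo h \<tau> c c')"
  unfolding cell_def by (rule bounded_subset[OF bounded_cbox]) auto

lemma cell_measure:
  assumes "0 \<le> h" "0 \<le> \<tau>"
  shows "measure lborel (cell lo h \<tau> (c::'d::finite \<Rightarrow> nat) c') \<le> h ^ CARD('d) * \<tau>"
proof -
  define a :: "real^'d" where "a = (\<chi> i. lo + real (c i) * h)"
  define b :: "real^'d" where "b = (\<chi> i. lo + (real (c i) + 1) * h)"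
  have "measure lborel (cell lo h \<tau> c c') \<le> measure lborel (cbox (a, real c' * \<tau>) (b, (real c' + 1) * \<tau>))"
    unfolding cell_def a_def b_def
    by (rule measure_mono_fmeasurable) (auto intro: cell_borel[unfolded cell_def])
  also have "\<dots> = measure lborel (cbox a b) * measure lborel (cbox (real c' * \<tau>) ((real c' + 1) * \<tau>))"
    by (rule content_Pair)
  also have "measure lborel (cbox a b) = (\<Prod>i\<in>UNIV. b $ i - a $ i)"
    by (rule content_cbox_cart) (use assms in \<open>auto simp: box_ne_empty a_def b_def Basis_vec_def inner_axis cart_eq_inner_axis[symmetric] algebra_simps\<close>)
  also have "\<dots> = h ^ CARD('d)"
    by (simp add: a_def b_def algebra_simps)
  also have "measure lborel (cbox (real c' * \<tau>) ((real c' + 1) * \<tau>)) = \<tau>"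
    using assms by (simp add: algebra_simps)
  finally show ?thesis by simp
qed

lemma floor_cell:
  fixes h lo x :: real
  assumes h: "0 < h" and x: "lo < x" "x \<le> lo + real m * h"
  shows "nat \<lfloor>(x - lo) / h\<rfloor> \<le> m \<and> lo + real (nat \<lfloor>(x - lo) / h\<rfloor>) * h \<le> x
         \<and> x \<le> lo + (real (nat \<lfloor>(x - lo) / h\<rfloor>) + 1) * h"
proof -
  define z where "z = (x - lo) / h"
  have z0: "0 < z" using h x by (simp add: z_def)
  have zm: "z \<le> real m" using h x by (simp add: z_def divide_le_eq mult.commute)
  have fz: "real (nat \<lfloor>z\<rfloor>) = of_int \<lfloor>z\<rfloor>" using z0 by simp
  have 1: "nat \<lfloor>z\<rfloor> \<le> m" using zm z0 by (metis floor_of_nat floor_mono nat_int nat_mono)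
  have 2: "of_int \<lfloor>z\<rfloor> \<le> z" "z \<le> of_int \<lfloor>z\<rfloor> + 1" by linarith+
  have x: "x = lo + z * h" using h by (simp add: z_def)
  have 3: "of_int \<lfloor>z\<rfloor> * h \<le> z * h" using 2 h by (intro mult_right_mono) auto
  have 4: "z * h \<le> (of_int \<lfloor>z\<rfloor> + 1) * h" using 2 h by (intro mult_right_mono) auto
  show ?thesis unfolding z_def[symmetric] fz using 1 3 4 x by (intro conjI) linarith+
qed

lemma floor_mono_cell:
  fixes h lo x y :: real
  assumes "0 < h" "x \<le> y"
  shows "nat \<lfloor>(x - lo) / h\<rfloor> \<le> nat \<lfloor>(y - lo) / h\<rfloor>"
  using assms by (intro nat_mono floor_mono divide_right_mono) auto

lemma sorted_slt_distinct:
  assumes "sorted_wrt slt ps" shows "distinct ps"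
  unfolding distinct_conv_nth
proof (intro allI impI)
  fix i j assume ij: "i < length ps" "j < length ps" "i \<noteq> j"
  show "ps ! i \<noteq> ps ! j"
  proof (cases "i < j")
    case True then show ?thesis using sorted_wrt_nth_less[OF assms True ij(2)] by (auto simp: slt_def)
  next
    case False then have "j < i" using ij by auto
    then show ?thesis using sorted_wrt_nth_less[OF assms \<open>j < i\<close> ij(1)] by (auto simp: slt_def)
  qed
qed

definition Ucell :: "real \<Rightarrow> real \<Rightarrow> real \<Rightarrow> nat \<Rightarrow> ('d::finite \<Rightarrow> nat \<Rightarrow> nat) \<Rightarrow> (nat \<Rightarrow> nat) \<Rightarrow> ((real^'d) \<times> real) set" where
  "Ucell lo h \<tau> m F g = (\<Union>j<m. cell lo h \<tau> (\<lambda>i. F i j) (g j))"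

lemma Ucell_adm: "admissible_set (Ucell lo h \<tau> m F g)"
  unfolding admissible_set_def Ucell_def
proof (intro conjI)
  show "(\<Union>j<m. cell lo h \<tau> (\<lambda>i. F i j) (g j)) \<in> sets borel"
    using cell_borel by (intro sets.finite_UN) auto
  show "bounded (\<Union>j<m. cell lo h \<tau> (\<lambda>i. F i j) (g j))"
    using cell_bounded by (intro bounded_UN) auto
  show "(\<Union>j<m. cell lo h \<tau> (\<lambda>i. F i j) (g j)) \<subseteq> UNIV \<times> {0<..}"
    unfolding cell_def by auto
qed

lemma Ucell_measure:
  assumes "0 \<le> h" "0 \<le> \<tau>"
  shows "measure lborel (Ucell lo h \<tau> m (F::'d::finite \<Rightarrow> nat \<Rightarrow> nat) g) \<le> real m * (h ^ CARD('d) * \<tau>)"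
proof -
  have "measure lborel (Ucell lo h \<tau> m F g) \<le> (\<Sum>j<m. measure lborel (cell lo h \<tau> (\<lambda>i. F i j) (g j)))"
    unfolding Ucell_def by (rule measure_UNION_le) (use cell_borel in auto)
  also have "\<dots> \<le> (\<Sum>j<m. h ^ CARD('d) * \<tau>)"
    by (intro sum_mono cell_measure assms)
  finally show ?thesis by simp
qed

lemma box_bound:
  fixes lo R t :: real
  assumes pp: "poisson_process M PP" and R: "0 < R" and t: "0 < t" and m: "1 \<le> m"
    and cond: "exp 1 * 8 ^ (CARD('d) + 1) * R ^ CARD('d) * t \<le> real m ^ (CARD('d) + 1)"
  shows "\<exists>A\<in>sets M. {\<omega>\<in>space M. \<exists>ps. sorted_wrt slt ps \<and> length ps = m \<and>
            set ps \<subseteq> PP \<omega> \<inter> {(\<eta>::real^'d::finite, s). (\<forall>i. lo < \<eta>$i \<and> \<eta>$i \<le> lo + R) \<and> 0 < s \<and> s \<le> t}} \<subseteq> A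
          \<and> measure M A \<le> (1/2) ^ m"
proof -
  interpret prob_space M using pp by (simp add: poisson_process_def)
  define h where "h = R / real m"
  define \<tau> where "\<tau> = t / real m"
  have h0: "0 < h" and tau0: "0 < \<tau>" using R t m by (auto simp: h_def \<tau>_def)
  have Rh: "R = real m * h" and tt: "t = real m * \<tau>" using m by (auto simp: h_def \<tau>_def)
  define T where "T F g = {\<omega>\<in>space M. \<not> (finite (PP \<omega> \<inter> Ucell lo h \<tau> m F g) \<and> npts PP (Ucell lo h \<tau> m F g) \<omega> < m)}"
    for F :: "'d \<Rightarrow> nat \<Rightarrow> nat" and g
  define Idx where "Idx = (Pi UNIV (\<lambda>_::'d. MS m m)) \<times> MS m m"
  define A where "A = (\<Union>p\<in>Idx. T (fst p) (snd p))"
  define a where "a = R ^ CARD('d) * t / real m ^ (CARD('d) + 1)"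
  have a0: "0 \<le> a" using R t by (simp add: a_def)
  have ha: "h ^ CARD('d) * \<tau> = a"
    by (simp add: h_def \<tau>_def a_def power_divide)
  have ea: "exp 1 * a \<le> (1 / 8 ^ (CARD('d) + 1))"
  proof -
    have mpos: "0 < real m ^ (CARD('d)+1)" using m by simp
    have "exp 1 * a * 8 ^ (CARD('d) + 1) = (exp 1 * 8 ^ (CARD('d) + 1) * R ^ CARD('d) * t) / real m ^ (CARD('d)+1)"
      by (simp add: a_def)
    also have "\<dots> \<le> 1" using cond mpos by (simp add: divide_le_eq)
    finally have "exp 1 * a * 8 ^ (CARD('d) + 1) \<le> 1" .
    then show ?thesis by (simp add: le_divide_eq)
  qed
  have T: "T F g \<in> sets M \<and> measure M (T F g) \<le> (1 / 8 ^ (CARD('d) + 1)) ^ m" for F g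
  proof -
    have pt: "T F g \<in> sets M \<and> measure M (T F g) \<le> measure lborel (Ucell lo h \<tau> m F g) ^ m / fact m"
      unfolding T_def by (rule poisson_tail[OF pp Ucell_adm])
    have mu: "measure lborel (Ucell lo h \<tau> m F g) \<le> real m * a"
      using Ucell_measure[of h \<tau> lo m F g] h0 tau0 ha by simp
    have "measure lborel (Ucell lo h \<tau> m F g) ^ m / fact m \<le> (real m * a) ^ m / fact m"
      by (intro divide_right_mono power_mono mu) auto
    also have "\<dots> = a ^ m * (real m ^ m / fact m)" by (simp add: power_mult_distrib)
    also have "\<dots> \<le> a ^ m * exp (real m)"
      using a0 by (intro mult_left_mono pow_fact_le_exp) auto
    also have "\<dots> = (exp 1 * a) ^ m"
      by (simp add: power_mult_distrib exp_of_nat_mult[symmetric])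
    also have "\<dots> \<le> (1 / 8 ^ (CARD('d) + 1)) ^ m"
      using ea a0 by (intro power_mono) auto
    finally show ?thesis using pt by linarith
  qed
  have finMS: "finite (MS m m)" and cardMS: "card (MS m m) \<le> 2 ^ (m + m)" using MS_card by auto
  have finIdx: "finite Idx" unfolding Idx_def
    using finite_PiE[of "UNIV::'d set" "\<lambda>_. MS m m"] finMS by (simp add: PiE_UNIV_domain)
  have cardIdx: "card Idx \<le> (2 ^ (m + m)) ^ (CARD('d) + 1)"
  proof -
    have "card Idx = card (MS m m) ^ CARD('d) * card (MS m m)"
      unfolding Idx_def using card_PiE[of "UNIV::'d set" "\<lambda>_. MS m m"]
      by (simp add: PiE_UNIV_domain card_cartesian_product)
    also have "\<dots> \<le> (2 ^ (m + m)) ^ CARD('d) * 2 ^ (m + m)"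
      using cardMS by (intro mult_le_mono power_mono) auto
    finally show ?thesis by (simp add: mult.commute)
  qed
  have As: "A \<in> sets M" unfolding A_def using T finIdx by auto
  have "measure M A \<le> (\<Sum>p\<in>Idx. measure M (T (fst p) (snd p)))"
    unfolding A_def by (rule measure_UNION_le[OF finIdx]) (use T in auto)
  also have "\<dots> \<le> real (card Idx) * (1 / 8 ^ (CARD('d) + 1)) ^ m"
    by (rule sum_bounded_above) (use T in auto)
  also have "\<dots> \<le> real ((2 ^ (m + m)) ^ (CARD('d) + 1)) * (1 / 8 ^ (CARD('d) + 1)) ^ m"
    by (intro mult_right_mono) (use cardIdx in \<open>simp only: of_nat_le_iff\<close>, simp)
  also have "\<dots> = ((1/2) ^ (CARD('d) + 1)) ^ m"
  proof -
    have a1: "(2::real) ^ (m + m) = 4 ^ m"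
      by (metis mult_2 power_mult numeral_Bit0 numeral_One one_add_one power2_eq_square mult_2_right)
    have a2: "real ((2 ^ (m + m)) ^ (CARD('d) + 1)) = ((4::real) ^ (CARD('d) + 1)) ^ m"
    proof -
      have "real ((2 ^ (m + m)) ^ (CARD('d) + 1)) = ((4::real) ^ m) ^ (CARD('d) + 1)"
        by (simp only: of_nat_power of_nat_numeral a1)
      also have "\<dots> = ((4::real) ^ (CARD('d) + 1)) ^ m"
        by (simp only: power_mult[symmetric] mult.commute)
      finally show ?thesis .
    qed
    have a3: "(4::real) ^ (CARD('d) + 1) * (1 / 8 ^ (CARD('d) + 1)) = (1/2) ^ (CARD('d) + 1)"
      by (simp add: power_divide[symmetric] power_mult_distrib[symmetric])
    show ?thesis unfolding a2 power_mult_distrib[symmetric] a3 ..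
  qed
  also have "\<dots> \<le> (1/2) ^ m"
    by (intro power_mono) (auto simp: power_le_one)
  finally have mA: "measure M A \<le> (1/2) ^ m" .
  have incl: "{\<omega>\<in>space M. \<exists>ps. sorted_wrt slt ps \<and> length ps = m \<and>
            set ps \<subseteq> PP \<omega> \<inter> {(\<eta>::real^'d, s). (\<forall>i. lo < \<eta>$i \<and> \<eta>$i \<le> lo + R) \<and> 0 < s \<and> s \<le> t}} \<subseteq> A"
  proof
    fix \<omega> assume "\<omega> \<in> {\<omega>\<in>space M. \<exists>ps. sorted_wrt slt ps \<and> length ps = m \<and>
            set ps \<subseteq> PP \<omega> \<inter> {(\<eta>::real^'d, s). (\<forall>i. lo < \<eta>$i \<and> \<eta>$i \<le> lo + R) \<and> 0 < s \<and> s \<le> t}}"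
    then obtain ps where om: "\<omega> \<in> space M" and srt: "sorted_wrt slt ps" and len: "length ps = m"
      and sub: "set ps \<subseteq> PP \<omega> \<inter> {(\<eta>::real^'d, s). (\<forall>i. lo < \<eta>$i \<and> \<eta>$i \<le> lo + R) \<and> 0 < s \<and> s \<le> t}"
      by blast
    have inbox: "(\<forall>i. lo < fst (ps!j) $ i \<and> fst (ps!j) $ i \<le> lo + real m * h) \<and> 0 < snd (ps!j) \<and> snd (ps!j) \<le> 0 + real m * \<tau>"
      if "j < m" for j
    proof -
      have "ps!j \<in> {(\<eta>::real^'d, s). (\<forall>i. lo < \<eta>$i \<and> \<eta>$i \<le> lo + R) \<and> 0 < s \<and> s \<le> t}"
      proof -
        have "ps!j \<in> set ps" using that len by simp
        note IntD2[OF subsetD[OF sub this]]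
        then show ?thesis by simp
      qed
      then show ?thesis using Rh tt by (cases "ps!j") auto
    qed
    have inPP: "ps ! j \<in> PP \<omega>" if "j < m" for j using sub nth_mem[of j ps] that len by auto
    have le: "fst (ps!j) $ i \<le> fst (ps!j') $ i \<and> snd (ps!j) \<le> snd (ps!j')" if "j \<le> j'" "j' < m" for j j' i
    proof (cases "j = j'")
      case False
      then have "j < j'" using that by auto
      then have "slt (ps!j) (ps!j')" using sorted_wrt_nth_less[OF srt] that len by auto
      then show ?thesis by (auto simp: slt_def vlt_def less_imp_le)
    qed auto
    define F where "F i j = (if j < m then nat \<lfloor>(fst (ps!j) $ i - lo) / h\<rfloor> else 0)" for i j
    define g where "g j = (if j < m then nat \<lfloor>(snd (ps!j) - 0) / \<tau>\<rfloor> else 0)" for j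
    have FMS: "F i \<in> MS m m" for i
    proof -
      have "F i j \<le> m" if "j < m" for j
        using floor_cell[OF h0, of lo "fst (ps!j) $ i" m] inbox[OF that] that by (simp add: F_def)
      moreover have "F i a \<le> F i b" if "a \<le> b" "b < m" for a b
        using floor_mono_cell[OF h0, of "fst (ps!a) $ i" "fst (ps!b) $ i" lo] le[OF that, of i] that
        by (simp add: F_def)
      ultimately show ?thesis unfolding MS_def by (simp add: F_def)
    qed
    have gMS: "g \<in> MS m m"
    proof -
      have "g j \<le> m" if "j < m" for j
        using floor_cell[OF tau0, of 0 "snd (ps!j)" m] inbox[OF that] that by (simp add: g_def)
      moreover have "g a \<le> g b" if "a \<le> b" "b < m" for a b
        using floor_mono_cell[OF tau0, of "snd (ps!a)" "snd (ps!b)" 0] le[OF that] that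
        by (simp add: g_def)
      ultimately show ?thesis unfolding MS_def by (simp add: g_def)
    qed
    have FgIdx: "(F, g) \<in> Idx" unfolding Idx_def using FMS gMS by auto
    have incell: "ps ! j \<in> cell lo h \<tau> (\<lambda>i. F i j) (g j)" if j: "j < m" for j
    proof -
      have c1: "lo + real (F i j) * h \<le> fst (ps!j) $ i \<and> fst (ps!j) $ i \<le> lo + (real (F i j) + 1) * h" for i
        using floor_cell[OF h0, of lo "fst (ps!j) $ i" m] inbox[OF j] j by (simp add: F_def)
      have c2: "real (g j) * \<tau> \<le> snd (ps!j) \<and> snd (ps!j) \<le> (real (g j) + 1) * \<tau>"
        using floor_cell[OF tau0, of 0 "snd (ps!j)" m] inbox[OF j] j by (simp add: g_def)
      show ?thesis unfolding cell_def using c1 c2 inbox[OF j]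
        by (cases "ps ! j") (auto simp: mem_box_cart cbox_Pair_eq)
    qed
    have setsub: "set ps \<subseteq> PP \<omega> \<inter> Ucell lo h \<tau> m F g"
    proof
      fix p assume "p \<in> set ps"
      then obtain j where "j < m" "p = ps ! j" using len by (auto simp: in_set_conv_nth)
      then show "p \<in> PP \<omega> \<inter> Ucell lo h \<tau> m F g"
        using inPP incell unfolding Ucell_def by auto
    qed
    have "\<not> (finite (PP \<omega> \<inter> Ucell lo h \<tau> m F g) \<and> npts PP (Ucell lo h \<tau> m F g) \<omega> < m)"
    proof
      assume fin: "finite (PP \<omega> \<inter> Ucell lo h \<tau> m F g) \<and> npts PP (Ucell lo h \<tau> m F g) \<omega> < m"
      have "m = card (set ps)" using distinct_card[OF sorted_slt_distinct[OF srt]] len by simp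
      also have "\<dots> \<le> card (PP \<omega> \<inter> Ucell lo h \<tau> m F g)" using card_mono fin setsub by blast
      finally show False using fin by (simp add: npts_def)
    qed
    then have "\<omega> \<in> T F g" unfolding T_def using om by auto
    then show "\<omega> \<in> A" unfolding A_def using FgIdx by force
  qed
  show ?thesis using As mA incl by blast
qed

lemma linf_ge: "\<bar>x $ i\<bar> \<le> linf x"
  unfolding linf_def by (rule Max_ge) auto

lemma linf_attained: "\<exists>i. linf x = \<bar>x $ i\<bar>"
proof -
  have "linf x \<in> range (\<lambda>i. \<bar>x $ i\<bar>)" unfolding linf_def by (rule Max_in) auto
  then show ?thesis by auto
qed

lemma linf_nonneg: "0 \<le> linf x"
  using linf_ge[of x] abs_ge_zero order_trans by blast

lemma Imin_real:
  fixes \<sigma> :: "real^'d::finite \<Rightarrow> ereal"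
  assumes ss: "\<sigma> \<in> state_space" and q: "0 < q"
    and x0: "x0 \<in> {-q *\<^sub>R 1 .. q *\<^sub>R 1}" "\<sigma> x0 \<noteq> \<infinity>" "\<sigma> x0 \<noteq> -\<infinity>"
  shows "\<exists>kr. Imin {-q *\<^sub>R 1 .. q *\<^sub>R 1} \<sigma> = ereal kr"
proof -
  define K :: "(real^'d) set" where "K = {-q *\<^sub>R 1 .. q *\<^sub>R 1}"
  have "\<exists>S :: 'd \<Rightarrow> real set.
         (\<forall>i. finite (S i) \<and> -(q+1) \<in> S i \<and> (q+1) \<in> S i \<and> S i \<subseteq> {-(q+1)..(q+1)}) \<and>
         (\<forall>x y. (\<forall>i. x $ i \<in> {-(q+1)..<(q+1)} \<and> y $ i \<in> {-(q+1)..<(q+1)} \<and>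
                     (\<forall>s\<in>S i. s \<le> x $ i \<longleftrightarrow> s \<le> y $ i)) \<longrightarrow> \<sigma> x = \<sigma> y)"
    using ss q unfolding state_space_def by (auto simp del: minus_add_distrib)
  then obtain S :: "'d \<Rightarrow> real set" where S: "\<And>i. finite (S i)"
    and Sc: "\<And>x y. (\<forall>i. x $ i \<in> {-(q+1)..<(q+1)} \<and> y $ i \<in> {-(q+1)..<(q+1)} \<and>
                     (\<forall>s\<in>S i. s \<le> x $ i \<longleftrightarrow> s \<le> y $ i)) \<Longrightarrow> \<sigma> x = \<sigma> y"
    by blast
  define sig where "sig x = (\<lambda>i. {s\<in>S i. s \<le> x $ i})" for x :: "real^'d"
  have inK: "x $ i \<in> {-(q+1)..<(q+1)}" if "x \<in> K" for x i
  proof -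
    have "- q \<le> x $ i" "x $ i \<le> q" using that unfolding K_def by (auto simp: less_eq_vec_def)
    then show ?thesis by auto
  qed
  have same: "\<sigma> x = \<sigma> y" if "x \<in> K" "y \<in> K" "sig x = sig y" for x y
  proof (rule Sc, intro allI conjI)
    fix i
    show "x $ i \<in> {-(q+1)..<(q+1)}" "y $ i \<in> {-(q+1)..<(q+1)}" using inK that by auto
    have "{s\<in>S i. s \<le> x $ i} = {s\<in>S i. s \<le> y $ i}" using that(3) unfolding sig_def by metis
    then show "\<forall>s\<in>S i. s \<le> x $ i \<longleftrightarrow> s \<le> y $ i" by blast
  qed
  have fsig: "finite (sig ` K)"
  proof (rule finite_subset)
    show "sig ` K \<subseteq> Pi\<^sub>E UNIV (\<lambda>i. Pow (S i))" unfolding sig_def by auto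
    show "finite (Pi\<^sub>E UNIV (\<lambda>i. Pow (S i)))" using S by (intro finite_PiE) auto
  qed
  have "\<sigma> ` K = (\<lambda>T. \<sigma> (SOME x. x \<in> K \<and> sig x = T)) ` (sig ` K)"
  proof (intro equalityI subsetI)
    fix z assume "z \<in> \<sigma> ` K"
    then obtain x where x: "x \<in> K" "z = \<sigma> x" by auto
    have "\<exists>x'. x' \<in> K \<and> sig x' = sig x" using x by auto
    then have "(SOME x'. x' \<in> K \<and> sig x' = sig x) \<in> K \<and> sig (SOME x'. x' \<in> K \<and> sig x' = sig x) = sig x"
      by (rule someI_ex)
    then have "\<sigma> (SOME x'. x' \<in> K \<and> sig x' = sig x) = z" using same x by metis
    then show "z \<in> (\<lambda>T. \<sigma> (SOME x. x \<in> K \<and> sig x = T)) ` (sig ` K)" using x by force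
  next
    fix z assume "z \<in> (\<lambda>T. \<sigma> (SOME x. x \<in> K \<and> sig x = T)) ` (sig ` K)"
    then obtain x where x: "x \<in> K" "z = \<sigma> (SOME x'. x' \<in> K \<and> sig x' = sig x)" by auto
    have "\<exists>x'. x' \<in> K \<and> sig x' = sig x" using x by auto
    then have "(SOME x'. x' \<in> K \<and> sig x' = sig x) \<in> K"
      by (metis (mono_tags, lifting) someI_ex)
    then show "z \<in> \<sigma> ` K" using x by auto
  qed
  then have fK: "finite (\<sigma> ` K)" using fsig by simp
  define V where "V = {\<sigma> x | x. x \<in> K \<and> \<sigma> x \<noteq> \<infinity> \<and> \<sigma> x \<noteq> -\<infinity>}"
  have fV: "finite V" by (rule finite_subset[OF _ fK]) (auto simp: V_def)
  have nV: "V \<noteq> {}" using x0 by (auto simp: V_def K_def)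
  have "Inf V \<in> V" using Min_Inf[OF fV nV] Min_in[OF fV nV] by simp
  then obtain x where "x \<in> K" "\<sigma> x \<noteq> \<infinity>" "\<sigma> x \<noteq> -\<infinity>" "Inf V = \<sigma> x" unfolding V_def by auto
  then have "\<exists>kr. Inf V = ereal kr" by (cases "\<sigma> x") auto
  then show ?thesis unfolding Imin_def V_def K_def by simp
qed

lemma decay:
  fixes \<sigma> :: "real^'d::finite \<Rightarrow> ereal"
  assumes ss: "\<sigma> \<in> state_space"
  shows "\<exists>M0>0. \<forall>y. y \<le> b \<and> M0 \<le> linf y \<longrightarrow>
            \<sigma> y \<le> ereal (- L * linf y powr (real CARD('d) / (real CARD('d) + 1)))"
proof -
  define \<theta> where "\<theta> = real CARD('d) / (real CARD('d) + 1)"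
  have lim: "((\<lambda>M. SUP y\<in>{y. y \<le> b \<and> linf y \<ge> M}.
              ereal (linf y powr (- (real CARD('d) / (real CARD('d) + 1)))) * \<sigma> y) \<longlongrightarrow> -\<infinity>) at_top"
    using ss unfolding state_space_def by blast
  have "eventually (\<lambda>M. (SUP y\<in>{y. y \<le> b \<and> linf y \<ge> M}.
              ereal (linf y powr (- (real CARD('d) / (real CARD('d) + 1)))) * \<sigma> y) < ereal (- L)) at_top"
    by (rule order_tendstoD(2)[OF lim]) simp
  then obtain M1 where M1: "\<And>M. M \<ge> M1 \<Longrightarrow> (SUP y\<in>{y. y \<le> b \<and> linf y \<ge> M}.
              ereal (linf y powr (- (real CARD('d) / (real CARD('d) + 1)))) * \<sigma> y) < ereal (- L)"
    unfolding eventually_at_top_linorder by blast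
  define M0 where "M0 = max M1 1"
  have "\<sigma> y \<le> ereal (- L * linf y powr \<theta>)" if y: "y \<le> b" "M0 \<le> linf y" for y
  proof -
    define \<rho> where "\<rho> = linf y"
    have \<rho>1: "1 \<le> \<rho>" using y by (simp add: M0_def \<rho>_def)
    have "ereal (\<rho> powr (- \<theta>)) * \<sigma> y \<le> (SUP y\<in>{y. y \<le> b \<and> linf y \<ge> M0}.
              ereal (linf y powr (- (real CARD('d) / (real CARD('d) + 1)))) * \<sigma> y)"
      unfolding \<rho>_def \<theta>_def by (rule SUP_upper) (use y in auto)
    also have "\<dots> < ereal (- L)" by (rule M1) (simp add: M0_def)
    finally have lt: "ereal (\<rho> powr (- \<theta>)) * \<sigma> y < ereal (- L)" .
    have pp: "0 < \<rho> powr (- \<theta>)" using \<rho>1 by simp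
    have inv: "\<rho> powr (- \<theta>) * \<rho> powr \<theta> = 1" using \<rho>1 by (simp add: powr_minus)
    show ?thesis
    proof (cases "\<sigma> y")
      case (real s)
      then have "\<rho> powr (- \<theta>) * s < - L" using lt by simp
      then have "(\<rho> powr (- \<theta>) * s) * \<rho> powr \<theta> \<le> - L * \<rho> powr \<theta>"
        using \<rho>1 by (intro mult_right_mono) auto
      then have "s \<le> - L * \<rho> powr \<theta>" using inv by (simp add: algebra_simps)
      then show ?thesis using real by (simp add: \<rho>_def)
    next
      case PInf then show ?thesis using lt pp by simp
    next
      case MInf then show ?thesis by simp
    qed
  qed
  moreover have "M0 > 0" by (simp add: M0_def)
  ultimately show ?thesis unfolding \<theta>_def by blast
qed

definition Rm :: "real \<Rightarrow> nat \<Rightarrow> nat \<Rightarrow> real" where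
  "Rm c0 d m = (real m ^ (d+1) / c0) powr (1 / real d)"

lemma Hpp_nonneg: "0 \<le> Hpp P y x t"
  unfolding Hpp_def
  by (rule SUP_upper2[where i = "[]"]) auto

lemma event_step:
  fixes \<sigma> :: "real^'d::finite \<Rightarrow> ereal" and P :: "((real^'d) \<times> real) set"
  defines "dr \<equiv> real CARD('d)"
  defines "\<theta> \<equiv> dr / (dr + 1)"
  assumes q: "0 < q" and t: "0 < t"
    and c: "0 < c" and c0: "c powr (dr + 1) = c0" and c0pos: "0 < c0"
    and decay: "\<forall>y. y \<le> q *\<^sub>R 1 \<and> M0 \<le> linf y \<longrightarrow> \<sigma> y \<le> ereal (- (2 * c + 3) * linf y powr \<theta>)"
    and X: "1 \<le> X" "q + 1 \<le> X" "M0 \<le> X" "\<bar>kr\<bar> \<le> X"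
    and v: "(X ^ 2) ^ CARD('d) \<le> v"
    and ev: "ereal v < Psi q (ereal kr) (evolve \<sigma> P t)"
  shows "\<exists>m. 1 \<le> m \<and> c * v powr (1 / (dr + 1)) \<le> real m \<and>
           (\<exists>ps. sorted_wrt slt ps \<and> length ps = m \<and>
              set ps \<subseteq> P \<inter> {(\<eta>, s). (\<forall>i. q - Rm c0 CARD('d) m < \<eta>$i \<and> \<eta>$i \<le> (q - Rm c0 CARD('d) m) + Rm c0 CARD('d) m) \<and> 0 < s \<and> s \<le> t})"
proof -
  have d1: "1 \<le> CARD('d)" by (simp add: Suc_leI)
  have dr1: "1 \<le> dr" using d1 by (simp add: dr_def)
  have th0: "0 < \<theta>" and th1: "\<theta> \<le> 1" and th2: "1/2 \<le> \<theta>" using dr1 by (auto simp: \<theta>_def field_simps)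
  have v1: "1 \<le> v"
  proof -
    have "1 \<le> (X ^ 2) ^ CARD('d)" using X by (simp add: one_le_power)
    then show ?thesis using v by simp
  qed
  define ev where "ev = evolve \<sigma> P t"
  obtain x where xq: "x \<le> q *\<^sub>R 1"
    and rat: "ereal v < ereal (linf x ^ CARD('d)) / (max 1 (ereal kr - ev x)) ^ (CARD('d) + 1)"
    using ev unfolding Psi_def ev_def less_SUP_iff by auto
  define r where "r = linf x"
  have r0: "0 \<le> r" by (simp add: r_def linf_nonneg)
  have main1: "v < r ^ CARD('d) \<and> ereal (kr - r powr \<theta>) < ev x"
  proof (cases "ev x")
    case PInf
    then have "ereal (kr - r ^ CARD('d)) \<noteq> ev x" by simp
    have "ereal kr - ev x = -\<infinity>" using PInf by simp
    then have "max 1 (ereal kr - ev x) = 1" by simp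
    then have "v < r ^ CARD('d)" using rat by (simp add: r_def)
    then show ?thesis using PInf by simp
  next
    case MInf
    then have D: "max 1 (ereal kr - ev x) = \<infinity>" by simp
    have pinf: "(\<infinity>::ereal) ^ Suc n = \<infinity>" for n by (induction n) auto
    have "ereal v < ereal (linf x ^ CARD('d)) / \<infinity>" using rat unfolding D Suc_eq_plus1[symmetric] pinf .
    then have "ereal v < 0" by simp
    then show ?thesis using v1 by simp
  next
    case (real e)
    define Dr where "Dr = max 1 (kr - e)"
    have Dr1: "1 \<le> Dr" by (simp add: Dr_def)
    have "max 1 (ereal kr - ev x) = ereal Dr" using real by (simp add: Dr_def max_def)
    then have "(max 1 (ereal kr - ev x)) ^ (CARD('d) + 1) = ereal (Dr ^ (CARD('d) + 1))" by simp
    then have "v < r ^ CARD('d) / Dr ^ (CARD('d) + 1)" using rat Dr1 by (simp add: r_def)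
    then have vD: "v * Dr ^ (CARD('d) + 1) < r ^ CARD('d)" using Dr1 by (simp add: field_simps)
    have D1: "1 \<le> Dr ^ (CARD('d) + 1)" by (rule one_le_power[OF Dr1])
    have a: "v \<le> v * Dr ^ (CARD('d) + 1)" using v1 D1 by (simp add: mult_le_cancel_left1)
    have b: "Dr ^ (CARD('d) + 1) \<le> v * Dr ^ (CARD('d) + 1)" using v1 D1 by (simp add: mult_le_cancel_right1)
    have vr: "v < r ^ CARD('d)" using a vD by linarith
    have "Dr ^ (CARD('d) + 1) < r ^ CARD('d)" using b vD by linarith
    moreover have rpos: "0 < r"
    proof (rule ccontr)
      assume "\<not> 0 < r" then have "r = 0" using r0 by simp
      then show False using vr v1 d1 by (simp add: power_0_left)
    qed
    moreover have "Dr powr (dr + 1) = Dr ^ (CARD('d) + 1)"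
      using powr_realpow[of Dr "CARD('d) + 1"] Dr1 by (simp add: dr_def add.commute)
    moreover have "r powr dr = r ^ CARD('d)"
      using powr_realpow[of r "CARD('d)"] rpos by (simp add: dr_def)
    ultimately have "Dr powr (dr + 1) < r powr dr" by simp
    then have "(Dr powr (dr + 1)) powr (1 / (dr + 1)) < (r powr dr) powr (1 / (dr + 1))"
      using dr1 by (intro powr_less_mono2) auto
    then have "Dr < r powr \<theta>" using dr1 Dr1 by (simp add: powr_powr \<theta>_def)
    moreover have "kr - e \<le> Dr" by (simp add: Dr_def)
    ultimately show ?thesis using vr real by simp
  qed
  then have vr: "v < r ^ CARD('d)" and evx: "ereal (kr - r powr \<theta>) < ev x" by auto
  have X0: "0 \<le> X ^ 2" by simp
  have rX: "X ^ 2 < r"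
  proof (rule ccontr)
    assume "\<not> X ^ 2 < r"
    then have "r ^ CARD('d) \<le> (X ^ 2) ^ CARD('d)" using r0 by (intro power_mono) auto
    then show False using vr v by linarith
  qed
  have XX: "X \<le> X ^ 2" using X by (simp add: power2_eq_square)
  have rq: "q < r" and rM: "M0 \<le> r" and r1: "1 \<le> r" using rX XX X by auto
  have rth: "X \<le> r powr \<theta>"
  proof -
    have "X = (X ^ 2) powr (1/2)" using X by (simp add: powr_half_sqrt)
    also have "\<dots> \<le> r powr (1/2)" using rX X by (intro powr_mono2) auto
    also have "\<dots> \<le> r powr \<theta>" using r1 th2 by (intro powr_mono) auto
    finally show ?thesis .
  qed
  obtain y where yx: "y \<le> x" and ys: "ereal (kr - r powr \<theta>) < \<sigma> y + Hpp P y x t"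
    using evx unfolding ev_def evolve_def less_SUP_iff by auto
  define \<rho> where "\<rho> = linf y"
  obtain i where ri: "r = \<bar>x $ i\<bar>" using linf_attained[of x] r_def by auto
  have "x $ i \<le> q" using xq by (simp add: less_eq_vec_def)
  then have "x $ i = - r" using ri rq by linarith
  moreover have "y $ i \<le> x $ i" using yx by (simp add: less_eq_vec_def)
  ultimately have "r \<le> \<bar>y $ i\<bar>" using r0 by linarith
  then have r\<rho>: "r \<le> \<rho>" using linf_ge[of y i] by (simp add: \<rho>_def)
  have \<rho>1: "1 \<le> \<rho>" using r1 r\<rho> by simp
  have yq: "y \<le> q *\<^sub>R 1" using yx xq by (rule order_trans)
  have sy: "\<sigma> y \<le> ereal (- (2 * c + 3) * \<rho> powr \<theta>)" using decay yq rM r\<rho> by (simp add: \<rho>_def)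
  have rho_th: "r powr \<theta> \<le> \<rho> powr \<theta>" using r\<rho> r0 th0 by (intro powr_mono2) auto
  have H0: "0 \<le> Hpp P y x t" by (rule Hpp_nonneg)
  have HL: "ereal ((2 * c + 1) * \<rho> powr \<theta>) < Hpp P y x t"
  proof (cases "Hpp P y x t")
    case PInf then show ?thesis by simp
  next
    case MInf then show ?thesis using H0 by simp
  next
    case (real h)
    show ?thesis
    proof (cases "\<sigma> y")
      case PInf then show ?thesis using sy by simp
    next
      case MInf then show ?thesis using ys real by simp
    next
      case (real s)
      then have s: "s \<le> - (2 * c + 3) * \<rho> powr \<theta>" using sy by simp
      have "kr - r powr \<theta> < s + h" using ys real \<open>Hpp P y x t = ereal h\<close> by simp
      moreover have "-(\<rho> powr \<theta>) \<le> kr" using X rth rho_th by linarith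
      ultimately have "(2 * c + 1) * \<rho> powr \<theta> < h" using s rho_th by (simp add: algebra_simps)
      then show ?thesis using \<open>Hpp P y x t = ereal h\<close> by simp
    qed
  qed
  then obtain ps where srt: "sorted_wrt slt ps"
    and psub: "set ps \<subseteq> P \<inter> {(\<eta>, s). vlt y \<eta> \<and> \<eta> \<le> x \<and> 0 < s \<and> s \<le> t}"
    and plen: "(2 * c + 1) * \<rho> powr \<theta> < real (length ps)"
    unfolding Hpp_def less_SUP_iff by auto
  define m where "m = nat \<lceil>c * (\<rho> + q) powr \<theta>\<rceil>"
  have pos: "0 < c * (\<rho> + q) powr \<theta>" using c \<rho>1 q by simp
  have m_ge: "c * (\<rho> + q) powr \<theta> \<le> real m" unfolding m_def using pos by linarith
  have m_le: "real m \<le> c * (\<rho> + q) powr \<theta> + 1" unfolding m_def using pos by linarith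
  have m1: "1 \<le> m" using m_ge pos by linarith
  have "(\<rho> + q) powr \<theta> \<le> (2 * \<rho>) powr \<theta>" using rq r\<rho> q th0 by (intro powr_mono2) auto
  also have "\<dots> = 2 powr \<theta> * \<rho> powr \<theta>" by (simp add: powr_mult)
  also have "\<dots> \<le> 2 * \<rho> powr \<theta>"
  proof -
    have "2 powr \<theta> \<le> 2 powr 1" using th1 by (intro powr_mono) auto
    then show ?thesis by (intro mult_right_mono) auto
  qed
  finally have "(\<rho> + q) powr \<theta> \<le> 2 * \<rho> powr \<theta>" .
  moreover have "1 \<le> \<rho> powr \<theta>" using \<rho>1 th0 by (intro ge_one_powr_ge_zero) auto
  ultimately have "real m \<le> (2 * c + 1) * \<rho> powr \<theta>"
  proof -
    assume a1: "(\<rho> + q) powr \<theta> \<le> 2 * \<rho> powr \<theta>" and a2: "1 \<le> \<rho> powr \<theta>"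
    have "c * (\<rho> + q) powr \<theta> \<le> c * (2 * \<rho> powr \<theta>)" using a1 c by (intro mult_left_mono) auto
    then show ?thesis using m_le a2 by (simp add: algebra_simps)
  qed
  then have mlen: "m \<le> length ps" using plen by linarith
  have mI: "c * v powr (1 / (dr + 1)) \<le> real m"
  proof -
    have "v powr (1 / (dr + 1)) \<le> (r ^ CARD('d)) powr (1 / (dr + 1))"
      using vr v1 dr1 by (intro powr_mono2) auto
    also have "\<dots> = r powr \<theta>" using r1
      by (simp add: powr_realpow[symmetric] powr_powr \<theta>_def dr_def del: powr_realpow)
    also have "\<dots> \<le> (\<rho> + q) powr \<theta>" using r\<rho> q r0 th0 by (intro powr_mono2) auto
    finally have "c * v powr (1 / (dr + 1)) \<le> c * (\<rho> + q) powr \<theta>" using c by simp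
    then show ?thesis using m_ge by linarith
  qed
  have Rbig: "\<rho> + q \<le> Rm c0 CARD('d) m"
  proof -
    have "c0 * (\<rho> + q) powr dr = (c * (\<rho> + q) powr \<theta>) powr (dr + 1)"
      using c q \<rho>1 dr1 by (simp add: powr_mult powr_powr c0 \<theta>_def)
    also have "\<dots> \<le> real m powr (dr + 1)" using m_ge pos dr1 by (intro powr_mono2) auto
    also have "\<dots> = real m ^ (CARD('d) + 1)"
    proof -
      have "real m powr (dr + 1) = real m powr real (CARD('d) + 1)" by (simp add: dr_def add.commute)
      also have "\<dots> = real m ^ (CARD('d) + 1)" using m1 by (intro powr_realpow) auto
      finally show ?thesis .
    qed
    finally have "(\<rho> + q) powr dr \<le> real m ^ (CARD('d) + 1) / c0" using c0pos by (simp add: field_simps)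
    then have "((\<rho> + q) powr dr) powr (1 / dr) \<le> (real m ^ (CARD('d) + 1) / c0) powr (1 / dr)"
      using dr1 by (intro powr_mono2) auto
    then show ?thesis using dr1 \<rho>1 q by (simp add: powr_powr Rm_def dr_def)
  qed
  define ps' where "ps' = take m ps"
  have A1: "sorted_wrt slt ps'" unfolding ps'_def using srt by (rule sorted_wrt_take)
  have A2: "length ps' = m" unfolding ps'_def using mlen by simp
  have A3: "set ps' \<subseteq> P \<inter> {(\<eta>, s). (\<forall>i. q - Rm c0 CARD('d) m < \<eta>$i \<and> \<eta>$i \<le> (q - Rm c0 CARD('d) m) + Rm c0 CARD('d) m) \<and> 0 < s \<and> s \<le> t}"
  proof
    fix p assume "p \<in> set ps'"
    then have pin: "p \<in> set ps" unfolding ps'_def by (rule in_set_takeD)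
    have pP: "p \<in> P" using IntD1[OF subsetD[OF psub pin]] .
    have preg: "p \<in> {(\<eta>, s). vlt y \<eta> \<and> \<eta> \<le> x \<and> 0 < s \<and> s \<le> t}"
      using IntD2[OF subsetD[OF psub pin]] .
    obtain \<eta> s where p: "p = (\<eta>, s)" by (cases p)
    have h1: "vlt y \<eta>" "\<eta> \<le> x" "0 < s" "s \<le> t" using preg unfolding p by simp_all
    have "q - Rm c0 CARD('d) m < \<eta> $ j \<and> \<eta> $ j \<le> q" for j
    proof -
      have "y $ j < \<eta> $ j" using h1 by (simp add: vlt_def)
      moreover have "- \<rho> \<le> y $ j" using linf_ge[of y j] by (simp add: \<rho>_def)
      moreover have "\<eta> $ j \<le> x $ j" using h1(2) by (simp add: less_eq_vec_def)
      moreover have "x $ j \<le> q" using xq by (simp add: less_eq_vec_def)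
      ultimately show ?thesis using Rbig by linarith
    qed
    then show "p \<in> P \<inter> {(\<eta>, s). (\<forall>i. q - Rm c0 CARD('d) m < \<eta>$i \<and> \<eta>$i \<le> (q - Rm c0 CARD('d) m) + Rm c0 CARD('d) m) \<and> 0 < s \<and> s \<le> t}"
      using pP h1 unfolding p by simp
  qed
  show ?thesis
    apply (rule exI[of _ m])
    apply (intro conjI m1 mI)
    apply (rule exI[of _ ps'])
    apply (intro conjI A1 A2 A3)
    done
qed

lemma geom_tail:
  fixes x :: real and f :: "nat \<Rightarrow> real"
  assumes x: "0 \<le> x" and f0: "\<And>m. 0 \<le> f m" and fb: "\<And>m. f m \<le> (if x \<le> real m then (1/2)^m else 0)"
  shows "summable f \<and> suminf f \<le> 4 * exp (- (ln 2 / 2) * x)"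
proof -
  define r :: real where "r = (1/2) powr (1/2)"
  have r_sqrt: "r = sqrt (1/2)" by (simp add: r_def powr_half_sqrt)
  have r0: "0 < r" by (simp add: r_def)
  have r34: "r \<le> 3/4"
  proof -
    have "sqrt (1/2) \<le> sqrt ((3/4)^2)" by (intro real_sqrt_le_mono) (simp add: power2_eq_square)
    then show ?thesis by (simp add: r_sqrt)
  qed
  have r1: "r < 1" using r34 by simp
  define K where "K = (1/2::real) powr (x/2)"
  have K0: "0 \<le> K" by (simp add: K_def)
  define g where "g m = K * r ^ m" for m
  have rm: "(1/2::real) powr (real m / 2) = r ^ m" for m
  proof -
    have "r ^ m = r powr real m" using r0 by (simp add: powr_realpow)
    also have "\<dots> = (1/2) powr (real m / 2)" by (simp add: r_def powr_powr)
    finally show ?thesis by simp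
  qed
  have fg: "f m \<le> g m" for m
  proof (cases "x \<le> real m")
    case True
    have "(1/2::real) ^ m = (1/2) powr (real m)" by (simp add: powr_realpow)
    also have "\<dots> = (1/2) powr (real m / 2) * (1/2) powr (real m / 2)"
      by (simp add: powr_add[symmetric])
    also have "\<dots> \<le> (1/2) powr (x / 2) * (1/2) powr (real m / 2)"
      using True by (intro mult_right_mono powr_mono') auto
    also have "\<dots> = g m" by (simp add: g_def K_def rm)
    finally show ?thesis using fb[of m] True by simp
  next
    case False
    have "0 \<le> K * r ^ m" using K0 r0 by simp
    then show ?thesis using fb[of m] False by (simp add: g_def)
  qed
  have sg: "summable g" unfolding g_def using r0 r1 by (intro summable_mult summable_geometric) auto
  have sf: "summable f" by (rule summable_comparison_test'[OF sg]) (use f0 fg in auto)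
  have "suminf f \<le> suminf g" by (intro suminf_le fg sf sg)
  also have "suminf g = K * (1 / (1 - r))"
    unfolding g_def using r0 r1 by (simp add: suminf_mult suminf_geometric)
  also have "\<dots> \<le> K * 4"
  proof -
    have "1 / (1 - r) \<le> 4" using r34 r1 by (simp add: field_simps)
    then show ?thesis using K0 by (intro mult_left_mono) auto
  qed
  also have "K = exp (- (ln 2 / 2) * x)"
    by (simp add: K_def powr_def ln_div)
  finally show ?thesis using sf by (simp add: mult.commute)
qed

lemma Rm_pos_pow:
  assumes c0: "0 < c0" and m: "1 \<le> m" and d: "1 \<le> d"
  shows "0 < Rm c0 d m \<and> Rm c0 d m ^ d = real m ^ (d+1) / c0"
proof -
  define a where "a = real m ^ (d+1) / c0"
  have a0: "0 < a" using c0 m by (simp add: a_def)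
  have "Rm c0 d m = a powr (1 / real d)" by (simp add: Rm_def a_def)
  moreover have "(a powr (1 / real d)) ^ d = a"
  proof -
    have "(a powr (1 / real d)) ^ d = (a powr (1 / real d)) powr (real d)"
      using a0 by (simp add: powr_realpow)
    also have "\<dots> = a" using d a0 by (simp add: powr_powr)
    finally show ?thesis .
  qed
  ultimately show ?thesis using a0 unfolding a_def[symmetric] by simp
qed

theorem lemma7p7:
  fixes q t :: real
  assumes d2: "CARD('d) \<ge> 2"
    and q: "q > 0" and t: "t > 0"
  shows "\<exists>C1 C2. 0 < C1 \<and> 0 < C2 \<and>
    (\<forall>\<sigma> :: real ^ 'd \<Rightarrow> ereal.
       \<sigma> \<in> state_space \<and>
       (\<exists>x\<in>{-q *\<^sub>R 1 .. q *\<^sub>R 1}. \<sigma> x \<noteq> \<infinity> \<and> \<sigma> x \<noteq> -\<infinity>) \<longrightarrow>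
       (\<exists>v0. \<forall>(M :: 'w measure) PP. poisson_process M PP \<longrightarrow>
          (\<forall>v\<ge>v0. \<exists>A\<in>sets M.
             {\<omega>\<in>space M. Psi q (Imin {-q *\<^sub>R 1 .. q *\<^sub>R 1} \<sigma>) (evolve \<sigma> (PP \<omega>) t) > ereal v} \<subseteq> A \<and>
             measure M A \<le> C1 * exp (- C2 * v powr (1 / (real CARD('d) + 1))))))"
proof -
  define dr where "dr = real CARD('d)"
  have d1: "1 \<le> CARD('d)" using d2 by simp
  have dr1: "1 \<le> dr" using d1 by (simp add: dr_def)
  define c0 where "c0 = exp 1 * 8 ^ (CARD('d) + 1) * t"
  have c0pos: "0 < c0" using t by (simp add: c0_def)
  define c where "c = c0 powr (1 / (dr + 1))"
  have cpos: "0 < c" using c0pos by (simp add: c_def)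
  have cc0: "c powr (dr + 1) = c0" using c0pos dr1 by (simp add: c_def powr_powr)
  define C2 where "C2 = c * ln 2 / 2"
  have C2pos: "0 < C2" using cpos by (simp add: C2_def)
  show ?thesis
  proof (rule exI[of _ "4::real"], rule exI[of _ C2], intro conjI allI impI)
    show "(0::real) < 4" by simp
    show "0 < C2" by (rule C2pos)
    fix \<sigma> :: "real ^ 'd \<Rightarrow> ereal"
    assume as: "\<sigma> \<in> state_space \<and> (\<exists>x\<in>{-q *\<^sub>R 1 .. q *\<^sub>R 1}. \<sigma> x \<noteq> \<infinity> \<and> \<sigma> x \<noteq> -\<infinity>)"
    then have ss: "\<sigma> \<in> state_space" by blast
    obtain x0 where x0: "x0 \<in> {-q *\<^sub>R 1 .. q *\<^sub>R 1}" "\<sigma> x0 \<noteq> \<infinity>" "\<sigma> x0 \<noteq> -\<infinity>" using as by blast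
    obtain kr where kr: "Imin {-q *\<^sub>R 1 .. q *\<^sub>R 1} \<sigma> = ereal kr"
      using Imin_real[OF ss q x0] by blast
    obtain M0 where M0: "\<forall>y. y \<le> q *\<^sub>R 1 \<and> M0 \<le> linf y \<longrightarrow>
            \<sigma> y \<le> ereal (- (2 * c + 3) * linf y powr (real CARD('d) / (real CARD('d) + 1)))"
      using decay[OF ss, of "q *\<^sub>R 1" "2 * c + 3"] by blast
    define X where "X = q + 1 + \<bar>M0\<bar> + \<bar>kr\<bar>"
    have X: "1 \<le> X" "q + 1 \<le> X" "M0 \<le> X" "\<bar>kr\<bar> \<le> X" using q by (auto simp: X_def)
    show "\<exists>v0. \<forall>(M :: 'w measure) PP. poisson_process M PP \<longrightarrow>
          (\<forall>v\<ge>v0. \<exists>A\<in>sets M.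
             {\<omega>\<in>space M. Psi q (Imin {-q *\<^sub>R 1 .. q *\<^sub>R 1} \<sigma>) (evolve \<sigma> (PP \<omega>) t) > ereal v} \<subseteq> A \<and>
             measure M A \<le> 4 * exp (- C2 * v powr (1 / (real CARD('d) + 1))))"
    proof (intro exI[of _ "(X ^ 2) ^ CARD('d)"] allI impI)
      fix M :: "'w measure" and PP :: "'w \<Rightarrow> ((real^'d) \<times> real) set" and v :: real
      assume pp: "poisson_process M PP" and v: "(X ^ 2) ^ CARD('d) \<le> v"
      interpret prob_space M using pp by (simp add: poisson_process_def)
      have v1: "1 \<le> v"
      proof -
        have "1 \<le> (X ^ 2) ^ CARD('d)" using X by (simp add: one_le_power)
        then show ?thesis using v by simp
      qed
      define xx where "xx = c * v powr (1 / (dr + 1))"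
      have xx0: "0 \<le> xx" using cpos by (simp add: xx_def)
      define I where "I = {m::nat. 1 \<le> m \<and> xx \<le> real m}"
      define G where "G m = {\<omega>\<in>space M. \<exists>ps. sorted_wrt slt ps \<and> length ps = m \<and>
          set ps \<subseteq> PP \<omega> \<inter> {(\<eta>::real^'d, s). (\<forall>i. q - Rm c0 CARD('d) m < \<eta>$i \<and> \<eta>$i \<le> (q - Rm c0 CARD('d) m) + Rm c0 CARD('d) m) \<and> 0 < s \<and> s \<le> t}}" for m
      have "\<forall>m\<in>I. \<exists>A\<in>sets M. G m \<subseteq> A \<and> measure M A \<le> (1/2) ^ m"
      proof
        fix m assume "m \<in> I"
        then have m1: "1 \<le> m" by (simp add: I_def)
        have R: "0 < Rm c0 CARD('d) m" and Rp: "Rm c0 CARD('d) m ^ CARD('d) = real m ^ (CARD('d)+1) / c0"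
          using Rm_pos_pow[OF c0pos m1 d1] by auto
        have cond: "exp 1 * 8 ^ (CARD('d) + 1) * Rm c0 CARD('d) m ^ CARD('d) * t \<le> real m ^ (CARD('d) + 1)"
        proof -
          have e: "exp 1 * 8 ^ (CARD('d) + 1) * a * t = c0 * a" for a :: real by (simp add: c0_def)
          show ?thesis unfolding e Rp using c0pos by simp
        qed
        show "\<exists>A\<in>sets M. G m \<subseteq> A \<and> measure M A \<le> (1/2) ^ m"
          unfolding G_def by (rule box_bound[OF pp R t m1 cond])
      qed
      then obtain Af where Af: "\<And>m. m \<in> I \<Longrightarrow> Af m \<in> sets M \<and> G m \<subseteq> Af m \<and> measure M (Af m) \<le> (1/2) ^ m"
        by metis
      define A' where "A' m = (if m \<in> I then Af m else {})" for m
      define A where "A = (\<Union>m. A' m)"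
      have A's: "range A' \<subseteq> sets M" using Af by (auto simp: A'_def)
      have As: "A \<in> sets M" unfolding A_def using A's by auto
      have fb: "measure M (A' m) \<le> (if xx \<le> real m then (1/2)^m else 0)" for m
      proof (cases "m \<in> I")
        case True then show ?thesis using Af[OF True] by (simp add: A'_def I_def)
      next
        case False
        then show ?thesis by (simp add: A'_def)
      qed
      have gt: "summable (\<lambda>m. measure M (A' m)) \<and> suminf (\<lambda>m. measure M (A' m)) \<le> 4 * exp (- (ln 2 / 2) * xx)"
        by (rule geom_tail[OF xx0 _ fb]) simp
      have "measure M A \<le> (\<Sum>m. measure M (A' m))"
        unfolding A_def using A's gt by (intro finite_measure_subadditive_countably) auto
      also have "\<dots> \<le> 4 * exp (- (ln 2 / 2) * xx)" using gt by simp
      also have "\<dots> = 4 * exp (- C2 * v powr (1 / (real CARD('d) + 1)))"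
        by (simp add: xx_def C2_def dr_def algebra_simps)
      finally have mA: "measure M A \<le> 4 * exp (- C2 * v powr (1 / (real CARD('d) + 1)))" .
      have incl: "{\<omega>\<in>space M. Psi q (Imin {-q *\<^sub>R 1 .. q *\<^sub>R 1} \<sigma>) (evolve \<sigma> (PP \<omega>) t) > ereal v} \<subseteq> A"
      proof
        fix \<omega> assume "\<omega> \<in> {\<omega>\<in>space M. Psi q (Imin {-q *\<^sub>R 1 .. q *\<^sub>R 1} \<sigma>) (evolve \<sigma> (PP \<omega>) t) > ereal v}"
        then have om: "\<omega> \<in> space M" and ev: "ereal v < Psi q (ereal kr) (evolve \<sigma> (PP \<omega>) t)"
          using kr by auto
        obtain m ps where m1: "1 \<le> m" and mx: "c * v powr (1 / (real CARD('d) + 1)) \<le> real m"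
          and ps: "sorted_wrt slt ps" "length ps = m"
            "set ps \<subseteq> PP \<omega> \<inter> {(\<eta>, s). (\<forall>i. q - Rm c0 CARD('d) m < \<eta>$i \<and> \<eta>$i \<le> (q - Rm c0 CARD('d) m) + Rm c0 CARD('d) m) \<and> 0 < s \<and> s \<le> t}"
          using event_step[OF q t cpos cc0[unfolded dr_def] c0pos M0 X v ev] by blast
        have mI: "m \<in> I" using m1 mx by (simp add: I_def xx_def dr_def)
        have "\<omega> \<in> G m" unfolding G_def using om ps by blast
        then have "\<omega> \<in> A' m" using Af[OF mI] mI by (auto simp: A'_def)
        then show "\<omega> \<in> A" unfolding A_def by blast
      qed
      show "\<exists>A\<in>sets M.
             {\<omega>\<in>space M. Psi q (Imin {-q *\<^sub>R 1 .. q *\<^sub>R 1} \<sigma>) (evolve \<sigma> (PP \<omega>) t) > ereal v} \<subseteq> A \<and>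
             measure M A \<le> 4 * exp (- C2 * v powr (1 / (real CARD('d) + 1)))"
        using As incl mA by blast
    qed
  qed
qed

end
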